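(* Let $(a,b)$ and $(c,d)$ be arcs of the completed $\infty$-gon, identified with indecomposable objects of $\mathcal{C}_2$. Then \[ \mathrm{Hom}_R((a,b),(c,d))\cong\begin{cases}\mathbb{C}^2&\text{if }-\infty<a\le c\text{ and }b\le d,\\ 0&\text{if }-\infty=a\le c\text{ and }d<b,\\ 0&\text{if }d<a,\\ \mathbb{C}&\text{otherwise,}\end{cases} \] where $\mathrm{Hom}_R$ denotes degree-preserving homomorphisms of graded $R$-modules.
   Context: Let $R=\mathbb{C}[x,y]/(x^2)$, graded with $\deg x=1$, $\deg y=-1$; $M(j)_n=M_{j+n}$. $\mathcal{C}_2$ is the category of finitely generated $\mathbb{Z}$-graded maximal Cohen–Macaulay $R$-modules with degree-preserving morphisms. An arc of the completed $\infty$-gon is a pair $(a,b)$ with $a\in\mathbb{Z}\cup\{-\infty\}$, $b\in\mathbb{Z}$, $a<b$ (with $-\infty$ smaller than every integer). Indecomposables correspond to arcs via $(x,y^k)(j)\leftrightarrow(-j-k,1-j)$ for $k\ge0$, $j\in\mathbb{Z}$ (with $(x,y^0)=R$), and $\mathbb{C}[y](j)=(R/(x))(j)\leftrightarrow(-\infty,-j)$; equivalently a finite arc $(a,b)$ is $(x,y^{b-a-1})(1-b)$ and an infinite arc $(-\infty,b)$ is $\mathbb{C}[y](-b)$. *)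

theory Defs
  imports "HOL-Computational_Algebra.Polynomial" "HOL-Library.Product_Plus"
begin

datatype endpt = NegInf | Fin int

definition is_arc :: "endpt \<Rightarrow> int \<Rightarrow> bool" where
  "is_arc a b = (case a of NegInf \<Rightarrow> True | Fin a' \<Rightarrow> a' < b)"

text \<open>Elements of R = C[x,y]/(x^2): a pair (p,q) of polynomials in y stands for p(y) + x q(y).
  Elements of C[y] = R/(x) are represented as pairs (p,0).\<close>
type_synonym elt = "complex poly \<times> complex poly"

text \<open>Graded modules: Ideal k j = (x,y^k)(j) (with (x,y^0) = R), CY j = C[y](j) = (R/(x))(j).\<close>
datatype gmod = Ideal nat int | CY int

fun gshift :: "gmod \<Rightarrow> int" where
  "gshift (Ideal k j) = j"
| "gshift (CY j) = j"

fun gcarrier :: "gmod \<Rightarrow> elt set" where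
  "gcarrier (Ideal k j) = {(p,q). [:0,1:] ^ k dvd p}"
| "gcarrier (CY j) = {(p,q). q = 0}"

fun xact :: "gmod \<Rightarrow> elt \<Rightarrow> elt" where
  "xact (Ideal k j) (p,q) = (0, p)"
| "xact (CY j) (p,q) = (0, 0)"

definition yact :: "elt \<Rightarrow> elt" where
  "yact = (\<lambda>(p,q). ([:0,1:] * p, [:0,1:] * q))"

definition sc :: "complex \<Rightarrow> elt \<Rightarrow> elt" where
  "sc c = (\<lambda>(p,q). (smult c p, smult c q))"

text \<open>Homogeneous of degree e in R (deg x = 1, deg y = -1): y^i has degree -i, x y^i degree 1-i.\<close>
definition homogR :: "int \<Rightarrow> elt \<Rightarrow> bool" where
  "homogR e = (\<lambda>(p,q). (\<forall>i. coeff p i \<noteq> 0 \<longrightarrow> int i = - e) \<and>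
                       (\<forall>i. coeff q i \<noteq> 0 \<longrightarrow> int i = 1 - e))"

text \<open>Homogeneous elements of degree n of M(j): those of degree j+n of M.\<close>
definition homog :: "gmod \<Rightarrow> int \<Rightarrow> elt \<Rightarrow> bool" where
  "homog M n m = (m \<in> gcarrier M \<and> homogR (gshift M + n) m)"

definition arc_mod :: "endpt \<Rightarrow> int \<Rightarrow> gmod" where
  "arc_mod a b = (case a of NegInf \<Rightarrow> CY (- b) | Fin a' \<Rightarrow> Ideal (nat (b - a' - 1)) (1 - b))"

text \<open>Degree-preserving R-module homomorphisms M \<rightarrow> N (R-linear = C-linear and commuting
  with x and y), taken extensional (zero outside the carrier of M).\<close>
definition ghom :: "gmod \<Rightarrow> gmod \<Rightarrow> (elt \<Rightarrow> elt) set" where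
  "ghom M N = {f.
     (\<forall>m. m \<notin> gcarrier M \<longrightarrow> f m = 0) \<and>
     (\<forall>m\<in>gcarrier M. f m \<in> gcarrier N) \<and>
     (\<forall>m\<in>gcarrier M. \<forall>m'\<in>gcarrier M. f (m + m') = f m + f m') \<and>
     (\<forall>c. \<forall>m\<in>gcarrier M. f (sc c m) = sc c (f m)) \<and>
     (\<forall>m\<in>gcarrier M. f (xact M m) = xact N (f m)) \<and>
     (\<forall>m\<in>gcarrier M. f (yact m) = yact (f m)) \<and>
     (\<forall>n m. homog M n m \<longrightarrow> homog N n (f m))}"

definition lincomb :: "complex list \<Rightarrow> (elt \<Rightarrow> elt) list \<Rightarrow> elt \<Rightarrow> elt" where
  "lincomb cs fs = (\<lambda>m. sum_list (map2 (\<lambda>c f. sc c (f m)) cs fs))"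

definition has_cdim :: "(elt \<Rightarrow> elt) set \<Rightarrow> nat \<Rightarrow> bool" where
  "has_cdim H n = (\<exists>bs. length bs = n \<and>
      (\<forall>cs. length cs = n \<longrightarrow> lincomb cs bs \<in> H) \<and>
      (\<forall>h\<in>H. \<exists>!cs. length cs = n \<and> h = lincomb cs bs))"

end

theory Submission
  imports Defs
begin

lemma Ypow: "[:0,1:] ^ n = (monom 1 n :: complex poly)"
  by (simp add: monom_altdef)

lemma sc_add: "sc c (u + v) = sc c u + sc c v"
  by (cases u; cases v) (simp add: sc_def smult_add_right)
lemma sc_zero[simp]: "sc c 0 = 0"
  by (simp add: sc_def zero_prod_def)
lemma sc_sc: "sc c (sc c' u) = sc c' (sc c u)"
  by (cases u) (simp add: sc_def mult.commute)
lemma yact_add: "yact (u + v) = yact u + yact v"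
  by (cases u; cases v) (simp add: yact_def distrib_left)
lemma yact_sc: "yact (sc c u) = sc c (yact u)"
  by (cases u) (simp add: yact_def sc_def)
lemma yact_zero[simp]: "yact 0 = 0"
  by (simp add: yact_def zero_prod_def)
lemma xact_add: "xact N (u + v) = xact N u + xact N v"
  by (cases N; cases u; cases v) (auto simp: zero_prod_def)
lemma xact_sc: "xact N (sc c u) = sc c (xact N u)"
  by (cases N; cases u) (auto simp: sc_def zero_prod_def)
lemma xact_zero[simp]: "xact N 0 = 0"
  by (cases N) (auto simp: zero_prod_def)

lemma carrier_add: "u \<in> gcarrier N \<Longrightarrow> v \<in> gcarrier N \<Longrightarrow> u + v \<in> gcarrier N"
  by (cases N; cases u; cases v) auto
lemma carrier_sc: "u \<in> gcarrier N \<Longrightarrow> sc c u \<in> gcarrier N"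
  by (cases N; cases u) (auto simp: sc_def dvd_smult)
lemma carrier_zero[simp]: "0 \<in> gcarrier N"
  by (cases N) (auto simp: zero_prod_def)

lemma homogR_add: "homogR e u \<Longrightarrow> homogR e v \<Longrightarrow> homogR e (u + v)"
  by (cases u; cases v) (auto simp: homogR_def, metis add.right_neutral, metis add.right_neutral)
lemma homogR_sc: "homogR e u \<Longrightarrow> homogR e (sc c u)"
  by (cases u) (auto simp: homogR_def sc_def)
lemma homogR_zero[simp]: "homogR e 0"
  by (auto simp: homogR_def zero_prod_def)

lemma homog_add: "homog N n u \<Longrightarrow> homog N n v \<Longrightarrow> homog N n (u + v)"
  by (simp add: homog_def carrier_add homogR_add)
lemma homog_sc: "homog N n u \<Longrightarrow> homog N n (sc c u)"
  by (simp add: homog_def carrier_sc homogR_sc)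
lemma homog_zero[simp]: "homog N n 0"
  by (simp add: homog_def)

lemma ghom_zero: "(\<lambda>m. 0) \<in> ghom M N"
  by (simp add: ghom_def)

lemma ghom_add:
  assumes "g \<in> ghom M N" "h \<in> ghom M N"
  shows "(\<lambda>m. g m + h m) \<in> ghom M N"
  using assms unfolding ghom_def
  by (auto simp: carrier_add sc_add xact_add yact_add homog_add add_ac)

lemma ghom_sc:
  assumes "g \<in> ghom M N"
  shows "(\<lambda>m. sc c (g m)) \<in> ghom M N"
  using assms unfolding ghom_def
  by (auto simp: carrier_sc sc_add xact_sc yact_sc homog_sc sc_sc)

lemma lincomb_Cons: "lincomb (c # cs) (b # bs) = (\<lambda>m. sc c (b m) + lincomb cs bs m)"
  by (simp add: lincomb_def)
lemma lincomb_Nil1: "lincomb [] bs = (\<lambda>m. 0)"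
  by (simp add: lincomb_def)
lemma lincomb_Nil2: "lincomb cs [] = (\<lambda>m. 0)"
  by (simp add: lincomb_def)

lemma lincomb_in:
  "set bs \<subseteq> ghom M N \<Longrightarrow> lincomb cs bs \<in> ghom M N"
proof (induction bs arbitrary: cs)
  case Nil then show ?case by (simp add: lincomb_Nil2 ghom_zero)
next
  case (Cons b bs)
  show ?case
  proof (cases cs)
    case Nil then show ?thesis by (simp add: lincomb_Nil1 ghom_zero)
  next
    case (Cons c cs')
    have "lincomb cs' bs \<in> ghom M N" using Cons.IH Cons.prems by auto
    moreover have "(\<lambda>m. sc c (b m)) \<in> ghom M N" using Cons.prems ghom_sc by auto
    ultimately show ?thesis using ghom_add[of "\<lambda>m. sc c (b m)" M N "lincomb cs' bs"]
      by (simp add: \<open>cs = c # cs'\<close> lincomb_Cons)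
  qed
qed


definition pm :: "complex poly \<Rightarrow> elt \<Rightarrow> elt" where
  "pm r u = (r * fst u, r * snd u)"

lemma pm_carrier: "m \<in> gcarrier M \<Longrightarrow> pm r m \<in> gcarrier M"
  by (cases M; cases m) (auto simp: pm_def dvd_mult)

lemma ghom_0: "f \<in> ghom M N \<Longrightarrow> f 0 = 0"
proof -
  assume f: "f \<in> ghom M N"
  have "f (0 + 0) = f 0 + f 0" using f carrier_zero[of M] unfolding ghom_def by blast
  then show ?thesis by simp
qed

lemma pm_pCons: "pm (pCons c r) m = sc c m + yact (pm r m)"
  by (cases m) (simp add: pm_def sc_def yact_def)

lemma pm_0: "pm 0 m = 0"
  by (simp add: pm_def zero_prod_def)

lemma ghom_pm:
  assumes f: "f \<in> ghom M N" and m: "m \<in> gcarrier M"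
  shows "f (pm r m) = pm r (f m)"
proof (induction r rule: pCons_induct)
  case 0
  then show ?case using ghom_0[OF f] by (simp add: pm_0)
next
  case (pCons c r)
  have c1: "pm r m \<in> gcarrier M" using pm_carrier[OF m] .
  have c2: "yact (pm r m) \<in> gcarrier M"
    using c1 pm_carrier[of "pm r m" M "[:0,1:]"] by (cases "pm r m") (simp add: pm_def yact_def)
  have "f (pm (pCons c r) m) = f (sc c m) + f (yact (pm r m))"
    using f m c2 carrier_sc[OF m] unfolding pm_pCons ghom_def by blast
  also have "\<dots> = sc c (f m) + yact (f (pm r m))"
    using f m c1 unfolding ghom_def by auto
  also have "\<dots> = pm (pCons c r) (f m)" using pCons by (simp add: pm_pCons)
  finally show ?case .
qed

lemma pm_add: "pm r (u + v) = pm r u + pm r v"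
  by (simp add: pm_def distrib_left)

lemma ghom_addD: "f \<in> ghom M N \<Longrightarrow> u \<in> gcarrier M \<Longrightarrow> v \<in> gcarrier M \<Longrightarrow> f (u + v) = f u + f v"
  unfolding ghom_def by blast

lemma decomp_Ideal:
  assumes f: "f \<in> ghom (Ideal k j) N" and m: "(p, q) \<in> gcarrier (Ideal k j)"
  shows "f (p, q) = pm (p div monom 1 k) (f (monom 1 k, 0)) + pm q (f (0, 1))"
proof -
  have dv: "monom 1 k dvd p" using m by (simp add: Ypow)
  have e: "(p, q) = pm (p div monom 1 k) (monom 1 k, 0) + pm q (0, 1)"
    using dv by (simp add: pm_def)
  have c1: "(monom 1 k, 0) \<in> gcarrier (Ideal k j)" by (simp add: Ypow)
  have c2: "(0, 1) \<in> gcarrier (Ideal k j)" by simp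
  have "f (p, q) = f (pm (p div monom 1 k) (monom 1 k, 0)) + f (pm q (0, 1))"
    by (subst e, rule ghom_addD[OF f pm_carrier[OF c1] pm_carrier[OF c2]])
  then show ?thesis using ghom_pm[OF f c1] ghom_pm[OF f c2] by simp
qed

lemma decomp_CY:
  assumes f: "f \<in> ghom (CY j) N" and m: "(p, q) \<in> gcarrier (CY j)"
  shows "f (p, q) = pm p (f (1, 0))"
proof -
  have e: "(p, q) = pm p (1, 0)" using m by (simp add: pm_def)
  have c1: "(1, 0) \<in> gcarrier (CY j)" by simp
  show ?thesis by (subst e, rule ghom_pm[OF f c1])
qed

definition hp :: "int \<Rightarrow> complex poly \<Rightarrow> bool" where
  "hp e p = (\<forall>i. coeff p i \<noteq> 0 \<longrightarrow> int i = e)"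

lemma homogR_hp: "homogR e (p, q) = (hp (- e) p \<and> hp (1 - e) q)"
  by (simp add: homogR_def hp_def)

lemma hp_shape: "hp e p \<Longrightarrow> \<exists>c. p = smult c (monom 1 (nat e)) \<and> (e < 0 \<longrightarrow> c = 0)"
  apply (rule exI[of _ "if e < 0 then 0 else coeff p (nat e)"])
  apply (auto simp: hp_def poly_eq_iff coeff_monom)
  done

lemma hp_mult: "hp e p \<Longrightarrow> hp (e + int s) (monom 1 s * p)"
  by (auto simp: hp_def coeff_monom_mult split: if_splits)

lemma hp_div: assumes "hp e p" "monom 1 k dvd p" shows "hp (e - int k) (p div monom 1 k)"
proof -
  obtain r where r: "p = monom 1 k * r" using assms(2) by (auto elim: dvdE)
  have "r = p div monom 1 k" using r by (simp add: monom_eq_0_iff)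
  moreover have "hp (e - int k) r"
    unfolding hp_def
  proof (intro allI impI)
    fix i assume "coeff r i \<noteq> 0"
    then have "coeff p (i + k) \<noteq> 0" using r by (simp add: coeff_monom_mult)
    then show "int i = e - int k" using assms(1) unfolding hp_def by force
  qed
  ultimately show ?thesis by simp
qed

lemma hp_dvd_small: assumes "hp e p" "monom 1 k dvd p" "e < int k" shows "p = 0"
proof -
  obtain r where r: "p = monom 1 k * r" using assms(2) by (auto elim: dvdE)
  have "coeff r i = 0" for i
  proof (rule ccontr)
    assume "coeff r i \<noteq> 0"
    then have "coeff p (i + k) \<noteq> 0" using r by (simp add: coeff_monom_mult)
    then show False using assms(1,3) unfolding hp_def by force
  qed
  then have "r = 0" by (simp add: poly_eq_iff)
  then show ?thesis using r by simp
qed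


definition shiftY :: "gmod \<Rightarrow> nat \<Rightarrow> elt \<Rightarrow> elt" where
  "shiftY M s = (\<lambda>m. if m \<in> gcarrier M then pm (monom 1 s) m else 0)"
definition toX :: "gmod \<Rightarrow> nat \<Rightarrow> nat \<Rightarrow> elt \<Rightarrow> elt" where
  "toX M k e = (\<lambda>m. if m \<in> gcarrier M then (0, monom 1 e * (fst m div monom 1 k)) else 0)"
definition toY :: "gmod \<Rightarrow> nat \<Rightarrow> nat \<Rightarrow> elt \<Rightarrow> elt" where
  "toY M k e = (\<lambda>m. if m \<in> gcarrier M then (monom 1 e * (fst m div monom 1 k), 0) else 0)"

lemma yact_carrier: "m \<in> gcarrier M \<Longrightarrow> yact m \<in> gcarrier M"
  using pm_carrier[of m M "[:0,1:]"] by (cases m) (simp add: pm_def yact_def)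
lemma xact_carrier: "m \<in> gcarrier M \<Longrightarrow> xact M m \<in> gcarrier M"
  by (cases M; cases m) (auto simp: zero_prod_def)

lemma homog_Ideal: "homog (Ideal k j) n (p, q) =
   (monom 1 k dvd p \<and> hp (- (j + n)) p \<and> hp (1 - (j + n)) q)"
  by (simp add: homog_def homogR_hp Ypow)
lemma homog_CY: "homog (CY j) n (p, q) = (q = 0 \<and> hp (- (j + n)) p)"
  by (auto simp: homog_def homogR_hp hp_def)

lemma monom_dvd_le: "k' \<le> k \<Longrightarrow> monom 1 k' dvd (monom 1 k :: complex poly)"
  by (metis Ypow le_imp_power_dvd)

lemma hp_zero[simp]: "hp e 0"
  by (simp add: hp_def)

lemma ghom_gen:
  assumes car: "\<And>m. m \<in> gcarrier M \<Longrightarrow> F m \<in> gcarrier N"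
    and add: "\<And>m m'. m \<in> gcarrier M \<Longrightarrow> m' \<in> gcarrier M \<Longrightarrow> F (m + m') = F m + F m'"
    and scl: "\<And>c m. m \<in> gcarrier M \<Longrightarrow> F (sc c m) = sc c (F m)"
    and xa: "\<And>m. m \<in> gcarrier M \<Longrightarrow> F (xact M m) = xact N (F m)"
    and ya: "\<And>m. m \<in> gcarrier M \<Longrightarrow> F (yact m) = yact (F m)"
    and hom: "\<And>n m. homog M n m \<Longrightarrow> homog N n (F m)"
  shows "(\<lambda>m. if m \<in> gcarrier M then F m else 0) \<in> ghom M N"
  unfolding ghom_def
proof (intro CollectI conjI ballI allI impI)
  fix m m' assume A: "m \<in> gcarrier M" and B: "m' \<in> gcarrier M"
  have C: "m + m' \<in> gcarrier M" using A B by (rule carrier_add)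
  show "(if m + m' \<in> gcarrier M then F (m + m') else 0) =
          (if m \<in> gcarrier M then F m else 0) + (if m' \<in> gcarrier M then F m' else 0)"
    unfolding if_P[OF A] if_P[OF B] if_P[OF C] by (rule add[OF A B])
next
  fix c m assume A: "m \<in> gcarrier M"
  have C: "sc c m \<in> gcarrier M" using A by (rule carrier_sc)
  show "(if sc c m \<in> gcarrier M then F (sc c m) else 0) = sc c (if m \<in> gcarrier M then F m else 0)"
    unfolding if_P[OF A] if_P[OF C] by (rule scl[OF A])
next
  fix m assume A: "m \<in> gcarrier M"
  have C: "xact M m \<in> gcarrier M" using A by (rule xact_carrier)
  show "(if xact M m \<in> gcarrier M then F (xact M m) else 0) = xact N (if m \<in> gcarrier M then F m else 0)"
    unfolding if_P[OF A] if_P[OF C] by (rule xa[OF A])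
next
  fix m assume A: "m \<in> gcarrier M"
  have C: "yact m \<in> gcarrier M" using A by (rule yact_carrier)
  show "(if yact m \<in> gcarrier M then F (yact m) else 0) = yact (if m \<in> gcarrier M then F m else 0)"
    unfolding if_P[OF A] if_P[OF C] by (rule ya[OF A])
next
  fix n m assume h: "homog M n m"
  have A: "m \<in> gcarrier M" using h by (simp add: homog_def)
  show "homog N n (if m \<in> gcarrier M then F m else 0)"
    unfolding if_P[OF A] by (rule hom[OF h])
next
  fix m assume A: "m \<in> gcarrier M"
  show "(if m \<in> gcarrier M then F m else 0) \<in> gcarrier N"
    unfolding if_P[OF A] by (rule car[OF A])
qed simp

lemma div_monom_mult: "monom 1 k dvd p \<Longrightarrow> (r * p) div monom 1 k = r * (p div (monom 1 k :: complex poly))"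
  by (simp add: div_mult_swap)

lemma pCons0_div: "monom 1 k dvd p \<Longrightarrow> pCons 0 p div monom 1 k = pCons 0 (p div (monom 1 k :: complex poly))"
  using div_monom_mult[of k p "[:0,1:]"] by simp

lemma shiftY_FF:
  assumes "k' \<le> k + s" "int s = j - j'"
  shows "shiftY (Ideal k j) s \<in> ghom (Ideal k j) (Ideal k' j')"
  unfolding shiftY_def
proof (rule ghom_gen)
  fix m assume "m \<in> gcarrier (Ideal k j)"
  then show "pm (monom 1 s) m \<in> gcarrier (Ideal k' j')"
  proof -
    obtain p q where m: "m = (p, q)" by (cases m)
    have "monom 1 k dvd p" using \<open>m \<in> _\<close> m by (simp add: Ypow)
    then obtain r where r: "p = monom 1 k * r" by (auto elim: dvdE)
    have "monom 1 s * p = monom 1 (k + s) * r" using r by (simp add: mult_monom mult.assoc[symmetric] add.commute)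
    moreover have "monom 1 k' dvd monom 1 (k + s) * r" using monom_dvd_le[OF assms(1)] by simp
    ultimately show ?thesis by (simp add: m pm_def Ypow)
  qed
next
  fix n m assume h: "homog (Ideal k j) n m"
  obtain p q where m: "m = (p, q)" by (cases m)
  have "hp (- (j + n)) p" "hp (1 - (j + n)) q" using h by (simp_all add: m homog_Ideal)
  then have "hp (- (j' + n)) (monom 1 s * p)" "hp (1 - (j' + n)) (monom 1 s * q)"
    using hp_mult[of "- (j + n)" p s] hp_mult[of "1 - (j + n)" q s] assms(2)
    by (simp_all add: algebra_simps)
  moreover have "monom 1 k' dvd monom 1 s * p"
  proof -
    have "monom 1 k dvd p" using h by (simp add: m homog_Ideal)
    then obtain r where r: "p = monom 1 k * r" by (auto elim: dvdE)
    have "monom 1 s * p = monom 1 (k + s) * r" using r by (simp add: mult_monom mult.assoc[symmetric] add.commute)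
    moreover have "monom 1 k' dvd monom 1 (k + s) * r" using monom_dvd_le[OF assms(1)] by simp
    ultimately show ?thesis by simp
  qed
  ultimately show "homog (Ideal k' j') n (pm (monom 1 s) m)"
    by (simp add: m pm_def homog_Ideal)
qed (auto simp: distrib_left pm_add pm_def sc_def mult_smult_right yact_def mult.left_commute zero_prod_def)

lemma shiftY_II:
  assumes "int s = j - j'"
  shows "shiftY (CY j) s \<in> ghom (CY j) (CY j')"
  unfolding shiftY_def
proof (rule ghom_gen)
  fix n m assume h: "homog (CY j) n m"
  obtain p q where m: "m = (p, q)" by (cases m)
  have "hp (- (j + n)) p" "q = 0" using h by (simp_all add: m homog_CY)
  then have "hp (- (j' + n)) (monom 1 s * p)"
    using hp_mult[of "- (j + n)" p s] assms by (simp_all add: algebra_simps)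
  then show "homog (CY j') n (pm (monom 1 s) m)"
    by (simp add: m pm_def homog_CY \<open>q = 0\<close>)
qed (auto simp: distrib_left pm_add pm_def sc_def mult_smult_right yact_def mult.left_commute zero_prod_def)

lemma toX_F:
  assumes "int e = 1 - j' + j + int k"
  shows "toX (Ideal k j) k e \<in> ghom (Ideal k j) (Ideal k' j')"
  unfolding toX_def
proof (rule ghom_gen)
  fix n m assume h: "homog (Ideal k j) n m"
  obtain p q where m: "m = (p, q)" by (cases m)
  have d: "monom 1 k dvd p" "hp (- (j + n)) p" using h by (simp_all add: m homog_Ideal)
  then have "hp (- (j + n) - k + e) (monom 1 e * (p div monom 1 k))"
    using hp_mult hp_div by blast
  then show "homog (Ideal k' j') n (0, monom 1 e * (fst m div monom 1 k))"
    using assms by (simp add: m homog_Ideal algebra_simps)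
next
  fix m assume "m \<in> gcarrier (Ideal k j)"
  then show "(0, monom 1 e * (fst (yact m) div monom 1 k)) = yact (0, monom 1 e * (fst m div monom 1 k))"
    by (cases m) (simp add: yact_def Ypow pCons0_div mult_pCons_right)
qed (auto simp: poly_div_add_left distrib_left sc_def div_smult_left zero_prod_def)

lemma toX_I:
  assumes "int e = 1 - j' + j"
  shows "toX (CY j) 0 e \<in> ghom (CY j) (Ideal k' j')"
  unfolding toX_def
proof (rule ghom_gen)
  fix n m assume h: "homog (CY j) n m"
  obtain p q where m: "m = (p, q)" by (cases m)
  have d: "hp (- (j + n)) p" using h by (simp_all add: m homog_CY)
  then have "hp (- (j + n) + e) (monom 1 e * p)"
    using hp_mult by blast
  then show "homog (Ideal k' j') n (0, monom 1 e * (fst m div monom 1 0))"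
    using assms by (simp add: m homog_Ideal algebra_simps)
next
  fix m assume "m \<in> gcarrier (CY j)"
  then show "(0, monom 1 e * (fst (yact m) div monom 1 0)) = yact (0, monom 1 e * (fst m div monom 1 0))"
    by (cases m) (simp add: yact_def mult.left_commute)
qed (auto simp: poly_div_add_left distrib_left sc_def div_smult_left zero_prod_def)

lemma toY_F:
  assumes "int e = j - j' + int k"
  shows "toY (Ideal k j) k e \<in> ghom (Ideal k j) (CY j')"
  unfolding toY_def
proof (rule ghom_gen)
  fix n m assume h: "homog (Ideal k j) n m"
  obtain p q where m: "m = (p, q)" by (cases m)
  have d: "monom 1 k dvd p" "hp (- (j + n)) p" using h by (simp_all add: m homog_Ideal)
  then have "hp (- (j + n) - k + e) (monom 1 e * (p div monom 1 k))"
    using hp_mult hp_div by blast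
  then show "homog (CY j') n (monom 1 e * (fst m div monom 1 k), 0)"
    using assms by (simp add: m homog_CY algebra_simps)
next
  fix m assume "m \<in> gcarrier (Ideal k j)"
  then show "(monom 1 e * (fst (yact m) div monom 1 k), 0) = yact (monom 1 e * (fst m div monom 1 k), 0)"
    by (cases m) (simp add: yact_def Ypow pCons0_div mult_pCons_right)
qed (auto simp: poly_div_add_left distrib_left sc_def div_smult_left zero_prod_def)


lemma smult_cancel: "smult c p = smult c' (p :: complex poly) \<Longrightarrow> p \<noteq> 0 \<Longrightarrow> c = c'"
proof -
  assume h: "smult c p = smult c' p" "p \<noteq> 0"
  then obtain i where i: "coeff p i \<noteq> 0" by (auto simp: poly_eq_iff)
  have "c * coeff p i = c' * coeff p i" using arg_cong[OF h(1), of "\<lambda>r. coeff r i"] by simp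
  then show ?thesis using i by simp
qed

lemma sc_cancel: "sc c u = sc c' u \<Longrightarrow> u \<noteq> 0 \<Longrightarrow> c = c'"
  by (cases u) (auto simp: sc_def zero_prod_def intro: smult_cancel)

lemma has_cdim_0:
  assumes "(\<lambda>m. 0) \<in> H" "\<forall>h\<in>H. h = (\<lambda>m. 0)"
  shows "has_cdim H 0"
  unfolding has_cdim_def
proof (rule exI[of _ "[]"], intro conjI allI impI ballI)
  fix cs :: "complex list" assume "length cs = 0"
  then show "lincomb cs [] \<in> H" using assms(1) by (simp add: lincomb_Nil1)
next
  fix h assume "h \<in> H"
  then have "h = lincomb [] []" using assms(2) by (simp add: lincomb_Nil1)
  then show "\<exists>!cs. length cs = 0 \<and> h = lincomb cs []" by auto
qed simp

lemma has_cdim_1: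
  assumes g: "g \<in> ghom M N" and all: "\<forall>h\<in>ghom M N. \<exists>c. h = (\<lambda>m. sc c (g m))"
    and nz: "g m0 \<noteq> 0"
  shows "has_cdim (ghom M N) 1"
  unfolding has_cdim_def
proof (rule exI[of _ "[g]"], intro conjI allI impI ballI)
  fix cs :: "complex list" assume "length cs = 1"
  then show "lincomb cs [g] \<in> ghom M N" using lincomb_in[of "[g]" M N cs] g by simp
next
  fix h assume "h \<in> ghom M N"
  then obtain c where c: "h = (\<lambda>m. sc c (g m))" using all by blast
  have l: "lincomb [c'] [g] = (\<lambda>m. sc c' (g m))" for c' by (simp add: lincomb_Cons lincomb_Nil1)
  show "\<exists>!cs. length cs = 1 \<and> h = lincomb cs [g]"
  proof (rule ex1I[of _ "[c]"])
    show "length [c] = 1 \<and> h = lincomb [c] [g]" using c l by simp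
  next
    fix cs assume "length cs = 1 \<and> h = lincomb cs [g]"
    then have "length cs = Suc 0" by simp
    then obtain c' where cs: "cs = [c']" by (auto simp: length_Suc_conv)
    have h: "h = (\<lambda>m. sc c' (g m))" using \<open>length cs = 1 \<and> h = lincomb cs [g]\<close> cs l by simp
    have A: "h m0 = sc c (g m0)" using c by simp
    have B: "h m0 = sc c' (g m0)" using h by simp
    have "sc c (g m0) = sc c' (g m0)" using A B by simp
    then have "c = c'" using sc_cancel nz by blast
    then show "cs = [c]" using cs by simp
  qed
qed simp

lemma has_cdim_2:
  assumes g1: "g1 \<in> ghom M N" and g2: "g2 \<in> ghom M N"
    and all: "\<forall>h\<in>ghom M N. \<exists>c1 c2. h = (\<lambda>m. sc c1 (g1 m) + sc c2 (g2 m))"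
    and p1: "g1 m0 = (P, 0)" and p2: "g2 m0 = (0, Q)" and nz: "P \<noteq> 0" "Q \<noteq> 0"
  shows "has_cdim (ghom M N) 2"
  unfolding has_cdim_def
proof (rule exI[of _ "[g1, g2]"], intro conjI allI impI ballI)
  fix cs :: "complex list" assume "length cs = 2"
  then show "lincomb cs [g1, g2] \<in> ghom M N" using lincomb_in[of "[g1, g2]" M N cs] g1 g2 by simp
next
  fix h assume "h \<in> ghom M N"
  then obtain c1 c2 where c: "h = (\<lambda>m. sc c1 (g1 m) + sc c2 (g2 m))" using all by blast
  have l: "lincomb [c1', c2'] [g1, g2] = (\<lambda>m. sc c1' (g1 m) + sc c2' (g2 m))" for c1' c2'
    by (simp add: lincomb_Cons lincomb_Nil1)
  show "\<exists>!cs. length cs = 2 \<and> h = lincomb cs [g1, g2]"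
  proof (rule ex1I[of _ "[c1, c2]"])
    show "length [c1, c2] = 2 \<and> h = lincomb [c1, c2] [g1, g2]" using c l by simp
  next
    fix cs assume a: "length cs = 2 \<and> h = lincomb cs [g1, g2]"
    then have "length cs = Suc (Suc 0)" by simp
    then obtain c1' c2' where cs: "cs = [c1', c2']"
      by (auto simp: length_Suc_conv)
    have e1: "h m0 = sc c1' (g1 m0) + sc c2' (g2 m0)"
      using a cs l by simp
    have e2: "h m0 = sc c1 (g1 m0) + sc c2 (g2 m0)"
      using c by simp
    have "(smult c1' P, smult c2' Q) = (smult c1 P, smult c2 Q)"
      using e1 e2 by (simp add: p1 p2 sc_def)
    then have "smult c1 P = smult c1' P" "smult c2 Q = smult c2' Q" by simp_all
    then have "c1 = c1'" "c2 = c2'" using smult_cancel nz by blast+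
    then show "cs = [c1, c2]" using cs by simp
  qed
qed simp


lemma ghom_homog: "f \<in> ghom M N \<Longrightarrow> homog M n m \<Longrightarrow> homog N n (f m)"
  unfolding ghom_def by blast
lemma ghom_ext: "f \<in> ghom M N \<Longrightarrow> m \<notin> gcarrier M \<Longrightarrow> f m = 0"
  unfolding ghom_def by blast
lemma ghom_x: "f \<in> ghom M N \<Longrightarrow> m \<in> gcarrier M \<Longrightarrow> f (xact M m) = xact N (f m)"
  unfolding ghom_def by blast

lemma hp_one: "hp 0 1"
  by (simp add: hp_def coeff_1)

lemma upper_II:
  assumes f: "f \<in> ghom (CY j) (CY j')"
  shows "\<exists>\<delta>. (j - j' < 0 \<longrightarrow> \<delta> = 0) \<and> f = (\<lambda>m. sc \<delta> (shiftY (CY j) (nat (j - j')) m))"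
proof -
  obtain U V where fg: "f (1, 0) = (U, V)" by (cases "f (1, 0)")
  have "homog (CY j) (- j) (1, 0)" by (simp add: homog_CY hp_one)
  then have "homog (CY j') (- j) (U, V)" using ghom_homog[OF f] fg by metis
  then have V: "V = 0" and U: "hp (j - j') U" by (simp_all add: homog_CY)
  obtain \<delta> where d: "U = smult \<delta> (monom 1 (nat (j - j')))" "j - j' < 0 \<longrightarrow> \<delta> = 0"
    using hp_shape[OF U] by blast
  have "f m = sc \<delta> (shiftY (CY j) (nat (j - j')) m)" for m
  proof (cases "m \<in> gcarrier (CY j)")
    case True
    obtain p q where m: "m = (p, q)" by (cases m)
    have "f (p, q) = pm p (f (1, 0))" using decomp_CY[OF f] True m by blast
    then show ?thesis using True by (simp add: m fg V d pm_def shiftY_def sc_def mult.commute)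
  next
    case False
    then show ?thesis using ghom_ext[OF f] by (simp add: shiftY_def)
  qed
  then show ?thesis using d(2) by blast
qed

lemma upper_IF:
  assumes f: "f \<in> ghom (CY j) (Ideal k' j')"
  shows "\<exists>\<delta>. (1 - j' + j < 0 \<longrightarrow> \<delta> = 0) \<and> f = (\<lambda>m. sc \<delta> (toX (CY j) 0 (nat (1 - j' + j)) m))"
proof -
  obtain U V where fg: "f (1, 0) = (U, V)" by (cases "f (1, 0)")
  have "homog (CY j) (- j) (1, 0)" by (simp add: homog_CY hp_one)
  then have "homog (Ideal k' j') (- j) (U, V)" using ghom_homog[OF f] fg by metis
  then have V: "hp (1 - j' + j) V" by (simp add: homog_Ideal algebra_simps)
  have "f (xact (CY j) (1, 0)) = xact (Ideal k' j') (f (1, 0))" by (rule ghom_x[OF f]) simp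
  then have U: "U = 0" using ghom_0[OF f] fg by (simp add: zero_prod_def)
  obtain \<delta> where d: "V = smult \<delta> (monom 1 (nat (1 - j' + j)))" "1 - j' + j < 0 \<longrightarrow> \<delta> = 0"
    using hp_shape[OF V] by blast
  have "f m = sc \<delta> (toX (CY j) 0 (nat (1 - j' + j)) m)" for m
  proof (cases "m \<in> gcarrier (CY j)")
    case True
    obtain p q where m: "m = (p, q)" by (cases m)
    have "f (p, q) = pm p (f (1, 0))" using decomp_CY[OF f] True m by blast
    then show ?thesis using True by (simp add: m fg U d pm_def toX_def sc_def mult.commute)
  next
    case False
    then show ?thesis using ghom_ext[OF f] by (simp add: toX_def)
  qed
  then show ?thesis using d(2) by blast
qed

lemma homog_g1: "int k = - (j + a) \<Longrightarrow> homog (Ideal k j) a (monom 1 k, 0)"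
  using hp_mult[OF hp_one, of k] by (simp add: homog_Ideal)
lemma homog_g2: "homog (Ideal k j) (1 - j) (0, 1)"
  by (simp add: homog_Ideal hp_one)

lemma xact_g1: "xact (Ideal k j) (monom 1 k, 0) = pm (monom 1 k) (0, 1)"
  by (simp add: pm_def)

lemma upper_FI:
  assumes f: "f \<in> ghom (Ideal k j) (CY j')" and a: "int k = - (j + a)"
  shows "\<exists>\<delta>. (j - j' + int k < 0 \<longrightarrow> \<delta> = 0) \<and> f = (\<lambda>m. sc \<delta> (toY (Ideal k j) k (nat (j - j' + int k)) m))"
proof -
  obtain U1 V1 where f1: "f (monom 1 k, 0) = (U1, V1)" by (cases "f (monom 1 k, 0)")
  obtain U2 V2 where f2: "f (0, 1) = (U2, V2)" by (cases "f (0, 1)")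
  have "homog (CY j') a (U1, V1)" using ghom_homog[OF f homog_g1[OF a]] f1 by metis
  then have V1: "V1 = 0" and U1: "hp (- (j' + a)) U1" by (simp_all add: homog_CY)
  have "f (0, 1) \<in> gcarrier (CY j')" using f unfolding ghom_def by simp
  then have V2: "V2 = 0" using f2 by simp
  have c1: "(monom 1 k, 0) \<in> gcarrier (Ideal k j)" by (simp add: Ypow)
  have c2: "(0, 1) \<in> gcarrier (Ideal k j)" by simp
  have "f (xact (Ideal k j) (monom 1 k, 0)) = xact (CY j') (f (monom 1 k, 0))" using ghom_x[OF f c1] .
  then have "pm (monom 1 k) (f (0, 1)) = 0"
    unfolding xact_g1 ghom_pm[OF f c2] by (simp add: f1 zero_prod_def)
  then have "monom 1 k * U2 = 0" by (simp add: f2 pm_def zero_prod_def)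
  then have U2: "U2 = 0" by (simp add: monom_eq_0_iff)
  have hpU1: "hp (j - j' + int k) U1" using U1 a by (simp add: algebra_simps)
  obtain \<delta> where d: "U1 = smult \<delta> (monom 1 (nat (j - j' + int k)))" "j - j' + int k < 0 \<longrightarrow> \<delta> = 0"
    using hp_shape[OF hpU1] by blast
  have "f m = sc \<delta> (toY (Ideal k j) k (nat (j - j' + int k)) m)" for m
  proof (cases "m \<in> gcarrier (Ideal k j)")
    case True
    obtain p q where m: "m = (p, q)" by (cases m)
    have "f (p, q) = pm (p div monom 1 k) (f (monom 1 k, 0)) + pm q (f (0, 1))"
      using decomp_Ideal[OF f] True m by blast
    then show ?thesis using True by (simp add: m f1 f2 U2 V1 V2 d pm_def toY_def sc_def mult.commute)
  next
    case False
    then show ?thesis using ghom_ext[OF f] by (simp add: toY_def)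
  qed
  then show ?thesis using d(2) by blast
qed


lemma upper_FF:
  assumes f: "f \<in> ghom (Ideal k j) (Ideal k' j')" and a: "int k = - (j + a)"
  shows "\<exists>\<beta> \<delta>. (j - j' < 0 \<or> j - j' + int k < int k' \<longrightarrow> \<beta> = 0) \<and>
    (1 - j' + j + int k < 0 \<longrightarrow> \<delta> = 0) \<and>
    f = (\<lambda>m. sc \<beta> (shiftY (Ideal k j) (nat (j - j')) m) + sc \<delta> (toX (Ideal k j) k (nat (1 - j' + j + int k)) m))"
proof -
  obtain U1 V1 where f1: "f (monom 1 k, 0) = (U1, V1)" by (cases "f (monom 1 k, 0)")
  obtain U2 V2 where f2: "f (0, 1) = (U2, V2)" by (cases "f (0, 1)")
  have "homog (Ideal k' j') a (U1, V1)" using ghom_homog[OF f homog_g1[OF a]] f1 by metis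
  then have U1d: "monom 1 k' dvd U1" and U1: "hp (j - j' + int k) U1" and V1: "hp (1 - j' + j + int k) V1"
    using a by (simp_all add: homog_Ideal algebra_simps)
  have "homog (Ideal k' j') (1 - j) (U2, V2)" using ghom_homog[OF f homog_g2] f2 by metis
  then have V2: "hp (j - j') V2" by (simp add: homog_Ideal algebra_simps)
  have c1: "(monom 1 k, 0) \<in> gcarrier (Ideal k j)" by (simp add: Ypow)
  have c2: "(0, 1) \<in> gcarrier (Ideal k j)" by simp
  have "f (xact (Ideal k j) (0, 1)) = xact (Ideal k' j') (f (0, 1))" using ghom_x[OF f c2] .
  then have U2: "U2 = 0" using ghom_0[OF f] f2 by (simp add: zero_prod_def)
  have "f (xact (Ideal k j) (monom 1 k, 0)) = xact (Ideal k' j') (f (monom 1 k, 0))" using ghom_x[OF f c1] .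
  then have "pm (monom 1 k) (f (0, 1)) = xact (Ideal k' j') (f (monom 1 k, 0))"
    unfolding xact_g1 ghom_pm[OF f c2] .
  then have U1e: "U1 = monom 1 k * V2" by (simp add: f1 f2 pm_def)
  obtain \<beta> where b: "V2 = smult \<beta> (monom 1 (nat (j - j')))" "j - j' < 0 \<longrightarrow> \<beta> = 0"
    using hp_shape[OF V2] by blast
  obtain \<delta> where d: "V1 = smult \<delta> (monom 1 (nat (1 - j' + j + int k)))" "1 - j' + j + int k < 0 \<longrightarrow> \<delta> = 0"
    using hp_shape[OF V1] by blast
  have b2: "\<beta> = 0" if "j - j' + int k < int k'"
  proof -
    have "U1 = 0" using hp_dvd_small[OF U1 U1d that] .
    then have "monom 1 k * V2 = 0" using U1e by simp
    then have "V2 = 0" by (simp add: monom_eq_0_iff)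
    then show ?thesis using b(1) by (simp add: monom_eq_0_iff)
  qed
  have "f m = sc \<beta> (shiftY (Ideal k j) (nat (j - j')) m) + sc \<delta> (toX (Ideal k j) k (nat (1 - j' + j + int k)) m)" for m
  proof (cases "m \<in> gcarrier (Ideal k j)")
    case True
    obtain p q where m: "m = (p, q)" by (cases m)
    have "monom 1 k dvd p" using True m by (simp add: Ypow)
    then obtain r where r: "p = monom 1 k * r" by (auto elim: dvdE)
    have pr: "p div monom 1 k = r" using r by (simp add: monom_eq_0_iff)
    have "f (p, q) = pm (p div monom 1 k) (f (monom 1 k, 0)) + pm q (f (0, 1))"
      using decomp_Ideal[OF f] True m by blast
    then show ?thesis using True
      by (simp add: m f1 f2 U2 U1e pr b(1) d(1) pm_def shiftY_def toX_def sc_def r algebra_simps)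
  next
    case False
    then show ?thesis using ghom_ext[OF f] by (simp add: toX_def shiftY_def)
  qed
  then show ?thesis using b(2) b2 d(2) by blast
qed


lemma sc_0_left[simp]: "sc 0 u = 0"
  by (cases u) (simp add: sc_def zero_prod_def)

lemma case_FF:
  fixes a b c d :: int
  assumes ab: "a < b" and cd: "c < d"
  shows "has_cdim (ghom (Ideal (nat (b - a - 1)) (1 - b)) (Ideal (nat (d - c - 1)) (1 - d)))
           (if a \<le> c \<and> b \<le> d then 2 else if d < a then 0 else 1)"
proof -
  define k where "k = nat (b - a - 1)"
  define k' where "k' = nat (d - c - 1)"
  define M where "M = Ideal k (1 - b)"
  define N where "N = Ideal k' (1 - d)"
  have ki: "int k = b - a - 1" "int k' = d - c - 1" using ab cd by (simp_all add: k_def k'_def)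
  have up: "\<exists>\<beta> \<delta>. (d - b < 0 \<or> d - a - 1 < d - c - 1 \<longrightarrow> \<beta> = 0) \<and> (d - a < 0 \<longrightarrow> \<delta> = 0) \<and>
     f = (\<lambda>m. sc \<beta> (shiftY M (nat (d - b)) m) + sc \<delta> (toX M k (nat (d - a)) m))"
    if "f \<in> ghom M N" for f
    using upper_FF[of f k "1 - b" k' "1 - d" a] that ki unfolding M_def N_def
    by (simp add: algebra_simps)
  have g2: "toX M k (nat (d - a)) \<in> ghom M N" if "a \<le> d"
    unfolding M_def N_def by (rule toX_F) (use ki that in simp)
  have m0: "(monom 1 k, 0) \<in> gcarrier M" by (simp add: M_def Ypow)
  have g2v: "toX M k (nat (d - a)) (monom 1 k, 0) = (0, monom 1 (nat (d - a)))"
    using m0 by (simp add: toX_def monom_eq_0_iff)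
  show ?thesis
  proof (cases "a \<le> c \<and> b \<le> d")
    case True
    have g1: "shiftY M (nat (d - b)) \<in> ghom M N"
      unfolding M_def N_def by (rule shiftY_FF) (use ki True in linarith)+
    have g1v: "shiftY M (nat (d - b)) (monom 1 k, 0) = (monom 1 (nat (d - b)) * monom 1 k, 0)"
      using m0 by (simp add: shiftY_def pm_def)
    have "has_cdim (ghom M N) 2"
    proof (rule has_cdim_2[OF g1 g2 _ g1v g2v])
      show "\<forall>h\<in>ghom M N. \<exists>c1 c2. h = (\<lambda>m. sc c1 (shiftY M (nat (d - b)) m) + sc c2 (toX M k (nat (d - a)) m))"
        using up by blast
    qed (use True ab in \<open>simp_all add: mult_monom monom_eq_0_iff\<close>)
    moreover have "(if a \<le> c \<and> b \<le> d then 2 else if d < a then 0 else 1) = (2::nat)" using True by simp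
    ultimately show ?thesis by (simp only: M_def N_def k_def k'_def)
  next
    case False
    note F = False
    show ?thesis
    proof (cases "d < a")
      case True
      have "has_cdim (ghom M N) 0"
      proof (rule has_cdim_0[OF ghom_zero], intro ballI)
        fix h assume "h \<in> ghom M N"
        then obtain \<beta> \<delta> where "(d - b < 0 \<or> d - a - 1 < d - c - 1 \<longrightarrow> \<beta> = 0)" "(d - a < 0 \<longrightarrow> \<delta> = 0)"
          "h = (\<lambda>m. sc \<beta> (shiftY M (nat (d - b)) m) + sc \<delta> (toX M k (nat (d - a)) m))"
          using up by blast
        then show "h = (\<lambda>m. 0)" using True ab by simp
      qed
      moreover have "(if a \<le> c \<and> b \<le> d then 2 else if d < a then 0 else 1) = (0::nat)" using F True by simp
      ultimately show ?thesis by (simp only: M_def N_def k_def k'_def)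
    next
      case False
      have "has_cdim (ghom M N) 1"
      proof (rule has_cdim_1[OF g2])
        show "a \<le> d" using False by simp
        show "\<forall>h\<in>ghom M N. \<exists>c. h = (\<lambda>m. sc c (toX M k (nat (d - a)) m))"
        proof
          fix h assume "h \<in> ghom M N"
          then obtain \<beta> \<delta> where "(d - b < 0 \<or> d - a - 1 < d - c - 1 \<longrightarrow> \<beta> = 0)"
            "h = (\<lambda>m. sc \<beta> (shiftY M (nat (d - b)) m) + sc \<delta> (toX M k (nat (d - a)) m))"
            using up by blast
          then show "\<exists>c. h = (\<lambda>m. sc c (toX M k (nat (d - a)) m))" using F by auto
        qed
        show "toX M k (nat (d - a)) (monom 1 k, 0) \<noteq> 0"
          using g2v by (simp add: zero_prod_def monom_eq_0_iff)
      qed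
      moreover have "(if a \<le> c \<and> b \<le> d then 2 else if d < a then 0 else 1) = (1::nat)" using F False by simp
      ultimately show ?thesis by (simp only: M_def N_def k_def k'_def)
    qed
  qed
qed


lemma cdim01:
  assumes up: "\<forall>h\<in>ghom M N. \<exists>\<delta>. (Q \<longrightarrow> \<delta> = 0) \<and> h = (\<lambda>m. sc \<delta> (g m))"
    and gin: "\<not> Q \<Longrightarrow> g \<in> ghom M N" and nz: "g m0 \<noteq> 0"
  shows "has_cdim (ghom M N) (if Q then 0 else 1)"
proof (cases Q)
  case True
  have "has_cdim (ghom M N) 0"
  proof (rule has_cdim_0[OF ghom_zero], intro ballI)
    fix h assume "h \<in> ghom M N"
    then show "h = (\<lambda>m. 0)" using up True by fastforce
  qed
  then show ?thesis using True by simp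
next
  case False
  have "has_cdim (ghom M N) 1"
    by (rule has_cdim_1[OF gin[OF False] _ nz]) (use up in blast)
  then show ?thesis using False by simp
qed

lemma case_FI:
  fixes a b d :: int
  assumes ab: "a < b"
  shows "has_cdim (ghom (Ideal (nat (b - a - 1)) (1 - b)) (CY (- d))) (if d < a then 0 else 1)"
proof -
  define k where "k = nat (b - a - 1)"
  have ki: "int k = b - a - 1" using ab by (simp add: k_def)
  have up: "\<forall>h\<in>ghom (Ideal k (1 - b)) (CY (- d)). \<exists>\<delta>. (d < a \<longrightarrow> \<delta> = 0) \<and>
      h = (\<lambda>m. sc \<delta> (toY (Ideal k (1 - b)) k (nat (d - a)) m))"
  proof
    fix h assume "h \<in> ghom (Ideal k (1 - b)) (CY (- d))"
    then show "\<exists>\<delta>. (d < a \<longrightarrow> \<delta> = 0) \<and> h = (\<lambda>m. sc \<delta> (toY (Ideal k (1 - b)) k (nat (d - a)) m))"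
      using upper_FI[of h k "1 - b" "- d" a] ki by (simp add: algebra_simps)
  qed
  have gin: "toY (Ideal k (1 - b)) k (nat (d - a)) \<in> ghom (Ideal k (1 - b)) (CY (- d))" if "\<not> d < a"
    by (rule toY_F) (use ki that in simp)
  have m0: "(monom 1 k, 0) \<in> gcarrier (Ideal k (1 - b))" by (simp add: Ypow)
  have nz: "toY (Ideal k (1 - b)) k (nat (d - a)) (monom 1 k, 0) \<noteq> 0"
    using m0 by (simp add: toY_def monom_eq_0_iff zero_prod_def)
  show ?thesis using cdim01[OF up gin nz] by (simp add: k_def)
qed

lemma case_IF:
  fixes b c d :: int
  assumes cd: "c < d"
  shows "has_cdim (ghom (CY (- b)) (Ideal (nat (d - c - 1)) (1 - d))) (if d < b then 0 else 1)"
proof -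
  define k' where "k' = nat (d - c - 1)"
  have up: "\<forall>h\<in>ghom (CY (- b)) (Ideal k' (1 - d)). \<exists>\<delta>. (d < b \<longrightarrow> \<delta> = 0) \<and>
      h = (\<lambda>m. sc \<delta> (toX (CY (- b)) 0 (nat (d - b)) m))"
  proof
    fix h assume "h \<in> ghom (CY (- b)) (Ideal k' (1 - d))"
    then show "\<exists>\<delta>. (d < b \<longrightarrow> \<delta> = 0) \<and> h = (\<lambda>m. sc \<delta> (toX (CY (- b)) 0 (nat (d - b)) m))"
      using upper_IF[of h "- b" k' "1 - d"] by (simp add: algebra_simps)
  qed
  have gin: "toX (CY (- b)) 0 (nat (d - b)) \<in> ghom (CY (- b)) (Ideal k' (1 - d))" if "\<not> d < b"
    by (rule toX_I) (use that in simp)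
  have nz: "toX (CY (- b)) 0 (nat (d - b)) (1, 0) \<noteq> 0"
    by (simp add: toX_def monom_eq_0_iff zero_prod_def)
  show ?thesis using cdim01[OF up gin nz] by (simp add: k'_def)
qed

lemma case_II:
  fixes b d :: int
  shows "has_cdim (ghom (CY (- b)) (CY (- d))) (if d < b then 0 else 1)"
proof -
  have up: "\<forall>h\<in>ghom (CY (- b)) (CY (- d)). \<exists>\<delta>. (d < b \<longrightarrow> \<delta> = 0) \<and>
      h = (\<lambda>m. sc \<delta> (shiftY (CY (- b)) (nat (d - b)) m))"
  proof
    fix h assume "h \<in> ghom (CY (- b)) (CY (- d))"
    then show "\<exists>\<delta>. (d < b \<longrightarrow> \<delta> = 0) \<and> h = (\<lambda>m. sc \<delta> (shiftY (CY (- b)) (nat (d - b)) m))"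
      using upper_II[of h "- b" "- d"] by (simp add: algebra_simps)
  qed
  have gin: "shiftY (CY (- b)) (nat (d - b)) \<in> ghom (CY (- b)) (CY (- d))" if "\<not> d < b"
    by (rule shiftY_II) (use that in simp)
  have nz: "shiftY (CY (- b)) (nat (d - b)) (1, 0) \<noteq> 0"
    by (simp add: shiftY_def pm_def monom_eq_0_iff zero_prod_def)
  show ?thesis using cdim01[OF up gin nz] by simp
qed

theorem proposition4p3:
  fixes a c :: endpt and b d :: int
  assumes "is_arc a b" and "is_arc c d"
  shows "has_cdim (ghom (arc_mod a b) (arc_mod c d))
           (if (\<exists>a' c'. a = Fin a' \<and> c = Fin c' \<and> a' \<le> c') \<and> b \<le> d then 2
            else if a = NegInf \<and> d < b then 0
            else if (\<exists>a'. a = Fin a' \<and> d < a') then 0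
            else 1)"
proof (cases a)
  case NegInf
  then show ?thesis
  proof (cases c)
    case NegInf
    then show ?thesis using \<open>a = NegInf\<close> case_II[of b d] by (auto simp: arc_mod_def split: if_splits)
  next
    case (Fin c')
    then show ?thesis using \<open>a = NegInf\<close> case_IF[of c' d b] assms by (auto simp: arc_mod_def is_arc_def split: if_splits)
  qed
next
  case (Fin a')
  then show ?thesis
  proof (cases c)
    case NegInf
    then show ?thesis using \<open>a = Fin a'\<close> case_FI[of a' b d] assms by (auto simp: arc_mod_def is_arc_def split: if_splits)
  next
    case (Fin c')
    then show ?thesis using \<open>a = Fin a'\<close> case_FF[of a' b c' d] assms
      by (auto simp: arc_mod_def is_arc_def split: if_splits)
  qed
qed

end
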